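(* For every integer $t \geq 1$, no graph in $\mathcal{H}_t$ has an odd $4$-coloring (and hence no graph in $\mathcal{H}_t$ has a PCF $4$-coloring).
   Context: For $t\ge 1$, $\mathcal{H}_t$ is the class of finite simple graphs having a connected component that consists of exactly $t$ blocks, each of which is a $5$-cycle. An odd $c$-coloring is a proper coloring with at most $c$ colors such that every non-isolated vertex has a color appearing an odd number of times in its open neighborhood. A PCF $c$-coloring is a proper coloring with at most $c$ colors such that every non-isolated vertex has a color appearing exactly once in its open neighborhood. *)

theory Defs
  imports Main
begin

definition simple_graph :: "'a set \<Rightarrow> ('a \<Rightarrow> 'a \<Rightarrow> bool) \<Rightarrow> bool" where
  "simple_graph V E \<longleftrightarrow> finite V \<and> (\<forall>u v. E u v \<longrightarrow> u \<in> V \<and> v \<in> V)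
     \<and> (\<forall>u v. E u v \<longrightarrow> E v u) \<and> (\<forall>v. \<not> E v v)"

definition connected_on :: "('a \<Rightarrow> 'a \<Rightarrow> bool) \<Rightarrow> 'a set \<Rightarrow> bool" where
  "connected_on E S \<longleftrightarrow> S \<noteq> {} \<and>
     (\<forall>x\<in>S. \<forall>y\<in>S. (\<lambda>u w. u \<in> S \<and> w \<in> S \<and> E u w)\<^sup>*\<^sup>* x y)"

definition is_component :: "'a set \<Rightarrow> ('a \<Rightarrow> 'a \<Rightarrow> bool) \<Rightarrow> 'a set \<Rightarrow> bool" where
  "is_component V E C \<longleftrightarrow> C \<subseteq> V \<and> connected_on E C \<and>
     (\<forall>C'. C \<subseteq> C' \<and> C' \<subseteq> V \<and> connected_on E C' \<longrightarrow> C' = C)"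

definition nonseparable_on :: "('a \<Rightarrow> 'a \<Rightarrow> bool) \<Rightarrow> 'a set \<Rightarrow> bool" where
  "nonseparable_on E S \<longleftrightarrow> connected_on E S \<and>
     (\<forall>v\<in>S. S - {v} \<noteq> {} \<longrightarrow> connected_on E (S - {v}))"

text \<open>Blocks: maximal connected subgraphs without a cut vertex (blocks are induced,
so they are determined by their vertex sets).\<close>
definition is_block :: "'a set \<Rightarrow> ('a \<Rightarrow> 'a \<Rightarrow> bool) \<Rightarrow> 'a set \<Rightarrow> bool" where
  "is_block V E B \<longleftrightarrow> B \<subseteq> V \<and> nonseparable_on E B \<and>
     (\<forall>B'. B \<subseteq> B' \<and> B' \<subseteq> V \<and> nonseparable_on E B' \<longrightarrow> B' = B)"

definition is_C5 :: "('a \<Rightarrow> 'a \<Rightarrow> bool) \<Rightarrow> 'a set \<Rightarrow> bool" where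
  "is_C5 E B \<longleftrightarrow> (\<exists>w :: nat \<Rightarrow> 'a. inj_on w {..<5} \<and> B = w ` {..<5} \<and>
     (\<forall>i<5. \<forall>j<5. E (w i) (w j) \<longleftrightarrow> (j = Suc i mod 5 \<or> i = Suc j mod 5)))"

definition in_H :: "nat \<Rightarrow> 'a set \<Rightarrow> ('a \<Rightarrow> 'a \<Rightarrow> bool) \<Rightarrow> bool" where
  "in_H t V E \<longleftrightarrow> simple_graph V E \<and> (\<exists>C. is_component V E C \<and>
     card {B. is_block V E B \<and> B \<subseteq> C} = t \<and>
     (\<forall>B. is_block V E B \<and> B \<subseteq> C \<longrightarrow> is_C5 E B))"

definition proper_coloring :: "'a set \<Rightarrow> ('a \<Rightarrow> 'a \<Rightarrow> bool) \<Rightarrow> nat \<Rightarrow> ('a \<Rightarrow> 'c) \<Rightarrow> bool" where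
  "proper_coloring V E c f \<longleftrightarrow> card (f ` V) \<le> c \<and>
     (\<forall>u\<in>V. \<forall>v\<in>V. E u v \<longrightarrow> f u \<noteq> f v)"

definition odd_coloring :: "'a set \<Rightarrow> ('a \<Rightarrow> 'a \<Rightarrow> bool) \<Rightarrow> nat \<Rightarrow> ('a \<Rightarrow> 'c) \<Rightarrow> bool" where
  "odd_coloring V E c f \<longleftrightarrow> proper_coloring V E c f \<and>
     (\<forall>v\<in>V. (\<exists>u\<in>V. E v u) \<longrightarrow> (\<exists>k. odd (card {u\<in>V. E v u \<and> f u = k})))"

definition pcf_coloring :: "'a set \<Rightarrow> ('a \<Rightarrow> 'a \<Rightarrow> bool) \<Rightarrow> nat \<Rightarrow> ('a \<Rightarrow> 'c) \<Rightarrow> bool" where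
  "pcf_coloring V E c f \<longleftrightarrow> proper_coloring V E c f \<and>
     (\<forall>v\<in>V. (\<exists>u\<in>V. E v u) \<longrightarrow> (\<exists>k. card {u\<in>V. E v u \<and> f u = k} = 1))"

end

theory Submission
  imports Defs
begin

lemma conn_mono:
  assumes "S \<subseteq> T" "(\<lambda>u w. u \<in> S \<and> w \<in> S \<and> E u w)\<^sup>*\<^sup>* x y"
  shows "(\<lambda>u w. u \<in> T \<and> w \<in> T \<and> E u w)\<^sup>*\<^sup>* x y"
  using assms(2)
proof (induction rule: rtranclp_induct)
  case base then show ?case by simp
next
  case (step y z) then show ?case using assms(1)
    by (metis (mono_tags, lifting) rtranclp.rtrancl_into_rtrancl subsetD)
qed

lemma conn_union:
  assumes "connected_on E S" "connected_on E T" "c \<in> S" "c \<in> T"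
  shows "connected_on E (S \<union> T)"
  unfolding connected_on_def
proof (intro conjI ballI)
  show "S \<union> T \<noteq> {}" using assms by auto
  fix x y assume x: "x \<in> S \<union> T" and y: "y \<in> S \<union> T"
  let ?R = "\<lambda>u w. u \<in> S \<union> T \<and> w \<in> S \<union> T \<and> E u w"
  have 1: "?R\<^sup>*\<^sup>* x c"
    using x assms conn_mono[of S "S \<union> T" E x c] conn_mono[of T "S \<union> T" E x c]
    unfolding connected_on_def by blast
  have 2: "?R\<^sup>*\<^sup>* c y"
    using y assms conn_mono[of S "S \<union> T" E c y] conn_mono[of T "S \<union> T" E c y]
    unfolding connected_on_def by blast
  show "?R\<^sup>*\<^sup>* x y" using 1 2 by (rule rtranclp_trans)
qed

lemma conn_single: "connected_on E {v}"
  unfolding connected_on_def by auto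

lemma nonsep_pair:
  assumes "E u v" "E v u" "u \<noteq> v"
  shows "nonseparable_on E {u,v}"
proof -
  have c: "connected_on E {u,v}"
    unfolding connected_on_def
  proof (intro conjI ballI)
    fix x y assume "x \<in> {u,v}" "y \<in> {u,v}"
    then show "(\<lambda>a w. a \<in> {u, v} \<and> w \<in> {u, v} \<and> E a w)\<^sup>*\<^sup>* x y"
      using assms by (auto intro: r_into_rtranclp)
  qed simp
  show ?thesis unfolding nonseparable_on_def
  proof (intro conjI ballI impI)
    fix x assume "x \<in> {u,v}" "{u,v} - {x} \<noteq> {}"
    then have "{u,v} - {x} = {v} \<or> {u,v} - {x} = {u}" using assms by auto
    then show "connected_on E ({u,v} - {x})" using conn_single by metis
  qed (rule c)
qed

lemma nonsep_remove_conn: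
  assumes "nonseparable_on E S" "S - {x} \<noteq> {}"
  shows "connected_on E (S - {x})"
proof (cases "x \<in> S")
  case True then show ?thesis using assms unfolding nonseparable_on_def by blast
next
  case False then have "S - {x} = S" by auto
  then show ?thesis using assms unfolding nonseparable_on_def by simp
qed

lemma nonsep_union2:
  assumes "nonseparable_on E S" "nonseparable_on E T" "a \<in> S" "a \<in> T" "b \<in> S" "b \<in> T" "a \<noteq> b"
  shows "nonseparable_on E (S \<union> T)"
  unfolding nonseparable_on_def
proof (intro conjI ballI impI)
  have cS: "connected_on E S" and cT: "connected_on E T"
    using assms(1,2) unfolding nonseparable_on_def by simp_all
  show "connected_on E (S \<union> T)" by (rule conn_union[OF cS cT assms(3,4)])
  fix x assume "x \<in> S \<union> T" "S \<union> T - {x} \<noteq> {}"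
  define c where "c = (if x = a then b else a)"
  have c1: "c \<in> S - {x}" using assms(3,5,7) unfolding c_def by simp
  have c2: "c \<in> T - {x}" using assms(4,6,7) unfolding c_def by simp
  have "S - {x} \<noteq> {}" using c1 by blast
  then have s1: "connected_on E (S - {x})" by (rule nonsep_remove_conn[OF assms(1)])
  have "T - {x} \<noteq> {}" using c2 by blast
  then have s2: "connected_on E (T - {x})" by (rule nonsep_remove_conn[OF assms(2)])
  have "connected_on E ((S - {x}) \<union> (T - {x}))" by (rule conn_union[OF s1 s2 c1 c2])
  moreover have "(S - {x}) \<union> (T - {x}) = S \<union> T - {x}" by auto
  ultimately show "connected_on E (S \<union> T - {x})" by simp
qed

lemma block_max:
  assumes "is_block V E S" "S \<subseteq> B'" "B' \<subseteq> V" "nonseparable_on E B'"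
  shows "B' = S"
  using assms unfolding is_block_def by blast

lemma block_eq:
  assumes "is_block V E S" "is_block V E T" "a \<in> S" "a \<in> T" "b \<in> S" "b \<in> T" "a \<noteq> b"
  shows "S = T"
proof -
  have nS: "nonseparable_on E S" "S \<subseteq> V" using assms(1) unfolding is_block_def by simp_all
  have nT: "nonseparable_on E T" "T \<subseteq> V" using assms(2) unfolding is_block_def by simp_all
  have n: "nonseparable_on E (S \<union> T)"
    by (rule nonsep_union2[OF nS(1) nT(1) assms(3-7)])
  have u: "S \<union> T \<subseteq> V" using nS nT by blast
  have "S \<union> T = S" by (rule block_max[OF assms(1) _ u n]) blast
  moreover have "S \<union> T = T" by (rule block_max[OF assms(2) _ u n]) blast
  ultimately show ?thesis by simp
qed

lemma block_exists:
  assumes sg: "simple_graph V E" and e: "E u v"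
  shows "\<exists>B. is_block V E B \<and> u \<in> B \<and> v \<in> B"
proof -
  define F where "F = {S. {u,v} \<subseteq> S \<and> S \<subseteq> V \<and> nonseparable_on E S}"
  have finV: "finite V" using sg unfolding simple_graph_def by simp
  have "F \<subseteq> Pow V" unfolding F_def by auto
  then have finF: "finite F" using finV finite_Pow_iff rev_finite_subset by metis
  have uv: "u \<in> V" "v \<in> V" "E v u" "u \<noteq> v" using sg e unfolding simple_graph_def by metis+
  have "{u,v} \<in> F" unfolding F_def using uv nonsep_pair[OF e uv(3) uv(4)] by auto
  then have neF: "F \<noteq> {}" by auto
  obtain S where S: "S \<in> F" "card S = Max (card ` F)"
    using Max_in[of "card ` F"] finF neF by (metis (no_types, lifting) empty_is_image finite_imageI imageE)
  have "is_block V E S" unfolding is_block_def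
  proof (intro conjI allI impI)
    show "S \<subseteq> V" "nonseparable_on E S" using S unfolding F_def by auto
    fix B' assume B': "S \<subseteq> B' \<and> B' \<subseteq> V \<and> nonseparable_on E B'"
    then have "B' \<in> F" using S unfolding F_def by auto
    then have "card B' \<le> card S" using S finF by simp
    moreover have "finite B'" using B' finV rev_finite_subset by metis
    ultimately show "B' = S" using B' card_seteq by metis
  qed
  then show ?thesis using S unfolding F_def by auto
qed

lemma block_in_comp:
  assumes "is_component V E C" "is_block V E B" "x \<in> B" "x \<in> C"
  shows "B \<subseteq> C"
proof -
  have cC: "connected_on E C" "C \<subseteq> V" using assms(1) unfolding is_component_def by simp_all
  have cB: "connected_on E B" "B \<subseteq> V" using assms(2) unfolding is_block_def nonseparable_on_def by simp_all
  have cu: "connected_on E (C \<union> B)" by (rule conn_union[OF cC(1) cB(1) assms(4,3)])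
  have "C \<union> B \<subseteq> V" using cC cB by blast
  then have "C \<union> B = C" using cu assms(1) unfolding is_component_def by blast
  then show ?thesis by auto
qed

lemma nb5:
  assumes "B = {x0,x1,x2,x3,x4}" "E v x0" "E v x1" "\<not> E v x2" "\<not> E v x3" "\<not> E v x4" "x0 \<noteq> x1"
  shows "\<exists>a b. a \<noteq> b \<and> a \<in> B \<and> b \<in> B \<and> {u \<in> B. E v u} = {a,b}"
proof (intro exI conjI)
  show "{u \<in> B. E v u} = {x0,x1}" using assms by auto
qed (use assms in auto)

lemma bal5:
  assumes "B = {x0,x1,x2,x3,x4}" "\<not> E v x2" "\<not> E v x3" "\<not> E v x4" "f x0 = f x1"
  shows "\<forall>u\<in>B. \<forall>u'\<in>B. E v u \<longrightarrow> E v u' \<longrightarrow> f u = f u'"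
  using assms by auto

lemma C5_conc:
  assumes "is_C5 E B"
  obtains a0 a1 a2 a3 a4 where "B = {a0,a1,a2,a3,a4}"
    "a0 \<noteq> a1" "a0 \<noteq> a2" "a0 \<noteq> a3" "a0 \<noteq> a4" "a1 \<noteq> a2" "a1 \<noteq> a3" "a1 \<noteq> a4"
    "a2 \<noteq> a3" "a2 \<noteq> a4" "a3 \<noteq> a4"
    "E a0 a1" "E a1 a2" "E a2 a3" "E a3 a4" "E a4 a0"
    "E a1 a0" "E a2 a1" "E a3 a2" "E a4 a3" "E a0 a4"
    "\<not> E a0 a2" "\<not> E a0 a3" "\<not> E a1 a3" "\<not> E a1 a4" "\<not> E a2 a4"
    "\<not> E a2 a0" "\<not> E a3 a0" "\<not> E a3 a1" "\<not> E a4 a1" "\<not> E a4 a2"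
    "\<not> E a0 a0" "\<not> E a1 a1" "\<not> E a2 a2" "\<not> E a3 a3" "\<not> E a4 a4"
proof -
  obtain w :: "nat \<Rightarrow> _" where inj: "inj_on w {..<5}" and B: "B = w ` {..<5}"
    and e: "\<forall>i<5. \<forall>j<5. E (w i) (w j) \<longleftrightarrow> (j = Suc i mod 5 \<or> i = Suc j mod 5)"
    using assms unfolding is_C5_def by blast
  have l5: "{..<5::nat} = {0,1,2,3,4}" by auto
  have d: "w i \<noteq> w j" if "i < 5" "j < 5" "i \<noteq> j" for i j
    using inj that by (metis inj_on_eq_iff lessThan_iff)
  show ?thesis
    apply (rule that[of "w 0" "w 1" "w 2" "w 3" "w 4"])
    using B l5 d e by simp_all
qed

lemma C5_card2:
  assumes "is_C5 E B"
  shows "\<exists>a b. a \<in> B \<and> b \<in> B \<and> a \<noteq> b"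
proof -
  obtain w :: "nat \<Rightarrow> _" where inj: "inj_on w {..<5}" and B: "B = w ` {..<5}"
    using assms unfolding is_C5_def by blast
  have "w 0 \<noteq> w 1" using inj_onD[OF inj, of 0 1] by auto
  moreover have "w 0 \<in> B" "w 1 \<in> B" using B by auto
  ultimately show ?thesis by blast
qed

lemma C5_nbrs:
  assumes "is_C5 E B" "v \<in> B"
  shows "\<exists>a b. a \<noteq> b \<and> a \<in> B \<and> b \<in> B \<and> {u \<in> B. E v u} = {a,b}"
  using assms(1)
proof (rule C5_conc)
  fix a0 a1 a2 a3 a4
  assume h:
    "B = {a0,a1,a2,a3,a4}"
    "a0 \<noteq> a1" "a0 \<noteq> a2" "a0 \<noteq> a3" "a0 \<noteq> a4" "a1 \<noteq> a2" "a1 \<noteq> a3" "a1 \<noteq> a4"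
    "a2 \<noteq> a3" "a2 \<noteq> a4" "a3 \<noteq> a4"
    "E a0 a1" "E a1 a2" "E a2 a3" "E a3 a4" "E a4 a0"
    "E a1 a0" "E a2 a1" "E a3 a2" "E a4 a3" "E a0 a4"
    "\<not> E a0 a2" "\<not> E a0 a3" "\<not> E a1 a3" "\<not> E a1 a4" "\<not> E a2 a4"
    "\<not> E a2 a0" "\<not> E a3 a0" "\<not> E a3 a1" "\<not> E a4 a1" "\<not> E a4 a2"
    "\<not> E a0 a0" "\<not> E a1 a1" "\<not> E a2 a2" "\<not> E a3 a3" "\<not> E a4 a4"
  have p: "B = {a1,a4,a0,a2,a3}" "B = {a0,a2,a1,a3,a4}" "B = {a1,a3,a0,a2,a4}"
      "B = {a2,a4,a0,a1,a3}" "B = {a3,a0,a1,a2,a4}" using h(1) by auto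
  have "v = a0 \<or> v = a1 \<or> v = a2 \<or> v = a3 \<or> v = a4" using h(1) assms(2) by blast
  then show ?thesis
  proof (elim disjE)
    assume v: "v = a0" show ?thesis unfolding v
      by (rule nb5[of B a1 a4 a0 a2 a3 E a0, OF p(1) h(12) h(21) h(32) h(22) h(23) h(8)])
  next
    assume v: "v = a1" show ?thesis unfolding v
      by (rule nb5[of B a0 a2 a1 a3 a4 E a1, OF p(2) h(17) h(13) h(33) h(24) h(25) h(3)])
  next
    assume v: "v = a2" show ?thesis unfolding v
      by (rule nb5[of B a1 a3 a0 a2 a4 E a2, OF p(3) h(18) h(14) h(27) h(34) h(26) h(7)])
  next
    assume v: "v = a3" show ?thesis unfolding v
      by (rule nb5[of B a2 a4 a0 a1 a3 E a3, OF p(4) h(19) h(15) h(28) h(29) h(35) h(10)])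
  next
    assume v: "v = a4" show ?thesis unfolding v
      by (rule nb5[of B a3 a0 a1 a2 a4 E a4, OF p(5) h(20) h(16) h(30) h(31) h(36) h(4)[symmetric]])
  qed
qed

lemma C5_bal:
  assumes "is_C5 E B" "B \<subseteq> V" "proper_coloring V E 4 f" "finite V"
  shows "\<exists>x\<in>B. \<forall>u\<in>B. \<forall>u'\<in>B. E x u \<longrightarrow> E x u' \<longrightarrow> f u = f u'"
  using assms(1)
proof (rule C5_conc)
  fix a0 a1 a2 a3 a4
  assume h:
    "B = {a0,a1,a2,a3,a4}"
    "a0 \<noteq> a1" "a0 \<noteq> a2" "a0 \<noteq> a3" "a0 \<noteq> a4" "a1 \<noteq> a2" "a1 \<noteq> a3" "a1 \<noteq> a4"
    "a2 \<noteq> a3" "a2 \<noteq> a4" "a3 \<noteq> a4"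
    "E a0 a1" "E a1 a2" "E a2 a3" "E a3 a4" "E a4 a0"
    "E a1 a0" "E a2 a1" "E a3 a2" "E a4 a3" "E a0 a4"
    "\<not> E a0 a2" "\<not> E a0 a3" "\<not> E a1 a3" "\<not> E a1 a4" "\<not> E a2 a4"
    "\<not> E a2 a0" "\<not> E a3 a0" "\<not> E a3 a1" "\<not> E a4 a1" "\<not> E a4 a2"
    "\<not> E a0 a0" "\<not> E a1 a1" "\<not> E a2 a2" "\<not> E a3 a3" "\<not> E a4 a4"
  show ?thesis
  proof (rule ccontr)
    assume nb: "\<not> ?thesis"
    have p: "B = {a1,a4,a0,a2,a3}" "B = {a0,a2,a1,a3,a4}" "B = {a1,a3,a0,a2,a4}"
      "B = {a2,a4,a0,a1,a3}" "B = {a3,a0,a1,a2,a4}" using h(1) by auto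
    have inB: "a0 \<in> B" "a1 \<in> B" "a2 \<in> B" "a3 \<in> B" "a4 \<in> B" using h(1) by auto
    have n1: "f a1 \<noteq> f a4"
    proof
      assume "f a1 = f a4"
      from bal5[of B a1 a4 a0 a2 a3 E a0 f, OF p(1) h(32) h(22) h(23) this] show False using nb inB by blast
    qed
    have n2: "f a0 \<noteq> f a2"
    proof
      assume "f a0 = f a2"
      from bal5[of B a0 a2 a1 a3 a4 E a1 f, OF p(2) h(33) h(24) h(25) this] show False using nb inB by blast
    qed
    have n3: "f a1 \<noteq> f a3"
    proof
      assume "f a1 = f a3"
      from bal5[of B a1 a3 a0 a2 a4 E a2 f, OF p(3) h(27) h(34) h(26) this] show False using nb inB by blast
    qed
    have n4: "f a2 \<noteq> f a4"
    proof
      assume "f a2 = f a4"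
      from bal5[of B a2 a4 a0 a1 a3 E a3 f, OF p(4) h(28) h(29) h(35) this] show False using nb inB by blast
    qed
    have n5: "f a3 \<noteq> f a0"
    proof
      assume "f a3 = f a0"
      from bal5[of B a3 a0 a1 a2 a4 E a4 f, OF p(5) h(30) h(31) h(36) this] show False using nb inB by blast
    qed
    have pc: "\<And>u v. u \<in> V \<Longrightarrow> v \<in> V \<Longrightarrow> E u v \<Longrightarrow> f u \<noteq> f v"
      using assms(3) unfolding proper_coloring_def by blast
    have inV: "a0 \<in> V" "a1 \<in> V" "a2 \<in> V" "a3 \<in> V" "a4 \<in> V" using inB assms(2) by auto
    have m1: "f a0 \<noteq> f a1" by (rule pc[OF inV(1,2) h(12)])
    have m2: "f a1 \<noteq> f a2" by (rule pc[OF inV(2,3) h(13)])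
    have m3: "f a2 \<noteq> f a3" by (rule pc[OF inV(3,4) h(14)])
    have m4: "f a3 \<noteq> f a4" by (rule pc[OF inV(4,5) h(15)])
    have m5: "f a4 \<noteq> f a0" by (rule pc[OF inV(5,1) h(16)])
    have "card {f a0, f a1, f a2, f a3, f a4} = 5"
      using n1 n2 n3 n4 n5 m1 m2 m3 m4 m5 by (simp add: eq_commute)
    moreover have "{f a0, f a1, f a2, f a3, f a4} \<subseteq> f ` V" using inV by auto
    ultimately have "5 \<le> card (f ` V)" using assms(4) by (metis card_mono finite_imageI)
    then show False using assms(3) unfolding proper_coloring_def by simp
  qed
qed

lemma no_cycle:
  fixes G :: "'a \<Rightarrow> 'a" and h :: "'a \<Rightarrow> 'a set"
  assumes fin: "finite C" and ne: "C \<noteq> {}"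
    and hb: "\<And>v. v \<in> C \<Longrightarrow> is_block V E (h v) \<and> v \<in> h v \<and> h v \<subseteq> C"
    and two: "\<And>v. v \<in> C \<Longrightarrow> \<exists>a b. a \<in> h v \<and> b \<in> h v \<and> a \<noteq> b"
    and Gin: "\<And>v. v \<in> C \<Longrightarrow> G v \<in> h v"
    and Gneq: "\<And>v. v \<in> C \<Longrightarrow> h (G v) \<noteq> h v"
  shows False
proof -
  have GC: "G v \<in> C" if "v \<in> C" for v using hb Gin that by blast
  have iterC: "(G ^^ n) v \<in> C" if "v \<in> C" for v n
    using that by (induction n) (auto intro: GC)
  obtain x0 where x0: "x0 \<in> C" using ne by auto
  have "\<not> inj_on (\<lambda>n. (G ^^ n) x0) {..card C}"
  proof
    assume "inj_on (\<lambda>n. (G ^^ n) x0) {..card C}"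
    moreover have "(\<lambda>n. (G ^^ n) x0) ` {..card C} \<subseteq> C" using iterC x0 by auto
    ultimately have "card {..card C} \<le> card C" using card_inj_on_le fin by metis
    then show False by simp
  qed
  then obtain i j where ij: "i \<noteq> j" "(G ^^ i) x0 = (G ^^ j) x0"
    unfolding inj_on_def by blast
  then obtain i j where ij: "i < j" "(G ^^ i) x0 = (G ^^ j) x0"
    by (metis linorder_neqE_nat)
  define y where "y = (G ^^ i) x0"
  have yC: "y \<in> C" using iterC x0 y_def by simp
  have "(G ^^ (j - i)) y = y"
    using ij unfolding y_def by (metis funpow_add le_add_diff_inverse2 less_imp_le_nat o_apply)
  then have exd: "\<exists>d. 0 < d \<and> (G ^^ d) y = y" using ij(1) zero_less_diff by blast
  define k where "k = (LEAST d. 0 < d \<and> (G ^^ d) y = y)"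
  have kp: "0 < k" "(G ^^ k) y = y" using LeastI_ex[OF exd] unfolding k_def by auto
  have kmin: "(G ^^ d) y \<noteq> y" if "0 < d" "d < k" for d
    using not_less_Least[of d "\<lambda>d. 0 < d \<and> (G ^^ d) y = y"] that unfolding k_def by auto
  have per: "(G ^^ (k * q)) y = y" for q
  proof (induction q)
    case (Suc q)
    have "(G ^^ (k * Suc q)) y = (G ^^ k) ((G ^^ (k * q)) y)"
      by (simp add: funpow_add)
    then show ?case using Suc kp by simp
  qed simp
  define xs where "xs n = (G ^^ n) y" for n
  have xsC: "xs n \<in> C" for n using iterC yC xs_def by simp
  have xs_add: "xs (a + b) = (G ^^ a) (xs b)" for a b
    unfolding xs_def by (simp add: funpow_add)
  have xs_mod: "xs n = xs (n mod k)" for n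
  proof -
    have "xs n = xs (n mod k + k * (n div k))" by simp
    also have "\<dots> = (G ^^ (n mod k)) (xs (k * (n div k)))"
      by (rule xs_add)
    also have "\<dots> = xs (n mod k)" using per unfolding xs_def by simp
    finally show ?thesis .
  qed
  have xs_dist: "xs (j + d) \<noteq> xs j" if "0 < d" "d < k" for j d
  proof
    assume eq: "xs (j + d) = xs j"
    define s where "s = k * (j + 1) - j"
    have sj: "s + j = k * (j + 1)" unfolding s_def using kp
      by (simp add: add.commute le_add1 trans_le_add2)
    have "xs (s + j) = y" using sj per[of "j+1"] unfolding xs_def by simp
    then have "y = (G ^^ s) (xs j)" using xs_add[of s j] by simp
    then have "(G ^^ d) y = (G ^^ d) ((G ^^ s) (xs j))" by simp
    also have "\<dots> = (G ^^ s) (xs (d + j))" using xs_add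
      by (metis add.commute funpow_add o_apply)
    also have "\<dots> = y" using eq \<open>y = (G ^^ s) (xs j)\<close> by (simp add: add.commute)
    finally show False using kmin that by simp
  qed
  define Cb where "Cb n = h (xs n)" for n
  have Cb_blk: "is_block V E (Cb n)" "xs n \<in> Cb n" "Cb n \<subseteq> C" for n
    using hb xsC Cb_def by auto
  have link: "xs (Suc n) \<in> Cb n" for n
    using Gin xsC Cb_def xs_def by simp
  define U where "U = (\<Union>n. Cb n)"
  have cover: "(\<Union>l\<le>k - 1. Cb (j + l)) = U" for j
  proof
    show "(\<Union>l\<le>k - 1. Cb (j + l)) \<subseteq> U" unfolding U_def by auto
    show "U \<subseteq> (\<Union>l\<le>k - 1. Cb (j + l))"
    proof
      fix z assume "z \<in> U"
      then obtain n where z: "z \<in> Cb n" unfolding U_def by auto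
      define d where "d = n + k * j - j"
      have jd: "j + d = n + k * j" unfolding d_def using kp
        by (simp add: add.commute trans_le_add2)
      have "xs (j + d mod k) = (G ^^ j) (xs (d mod k))" using xs_add by simp
      also have "\<dots> = (G ^^ j) (xs d)" using xs_mod by simp
      also have "\<dots> = xs (j + d)" using xs_add by simp
      also have "\<dots> = (G ^^ n) (xs (k * j))" using jd xs_add by simp
      also have "\<dots> = xs n" using per xs_def by simp
      finally have "Cb n = Cb (j + d mod k)" unfolding Cb_def by simp
      moreover have "d mod k \<le> k - 1" using kp by (simp add: less_Suc_eq_le[symmetric])
      ultimately show "z \<in> (\<Union>l\<le>k - 1. Cb (j + l))" using z by blast
    qed
  qed
  have key: "connected_on E (U - Z)"
    if nz: "\<And>d. 0 < d \<Longrightarrow> d < k \<Longrightarrow> xs (j + d) \<notin> Z"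
      and cz: "\<And>n. connected_on E (Cb n - Z)" for Z j
  proof -
    define D where "D i = (\<Union>l\<le>i. Cb (j + l) - Z)" for i
    have "i < k \<Longrightarrow> connected_on E (D i)" for i
    proof (induction i)
      case 0 then show ?case using cz unfolding D_def by simp
    next
      case (Suc i)
      have "D (Suc i) = D i \<union> (Cb (j + Suc i) - Z)"
        unfolding D_def by (auto simp: atMost_Suc)
      moreover have "xs (j + Suc i) \<in> D i"
        using link[of "j + i"] nz[of "Suc i"] Suc.prems unfolding D_def by auto
      moreover have "xs (j + Suc i) \<in> Cb (j + Suc i) - Z"
        using Cb_blk nz[of "Suc i"] Suc.prems by auto
      ultimately show ?case using conn_union Suc cz by (metis Suc_lessD)
    qed
    then have "connected_on E (D (k - 1))" using kp by simp
    moreover have "D (k - 1) = U - Z" using cover[of j] unfolding D_def by auto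
    ultimately show ?thesis by simp
  qed
  have cbz: "connected_on E (Cb n - {z})" for n z
  proof -
    have ns: "nonseparable_on E (Cb n)" using Cb_blk unfolding is_block_def by simp
    obtain a b where "a \<in> Cb n" "b \<in> Cb n" "a \<noteq> b" using two xsC Cb_def by metis
    then have "Cb n - {z} \<noteq> {}" by auto
    then show ?thesis using nonsep_remove_conn[OF ns] by simp
  qed
  have nsU: "nonseparable_on E U" unfolding nonseparable_on_def
  proof (intro conjI ballI impI)
    have "connected_on E (U - {})"
      by (rule key[of 0]) (use Cb_blk in \<open>auto simp: is_block_def nonseparable_on_def\<close>)
    then show "connected_on E U" by simp
    fix z assume "z \<in> U" "U - {z} \<noteq> {}"
    show "connected_on E (U - {z})"
    proof (cases "\<exists>m. xs m = z")
      case True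
      then obtain m where m: "xs m = z" by auto
      show ?thesis by (rule key[of m]) (use xs_dist m cbz in auto)
    next
      case False
      show ?thesis by (rule key[of 0]) (use False cbz in auto)
    qed
  qed
  have UV: "U \<subseteq> V" using Cb_blk unfolding U_def is_block_def by blast
  have "U = Cb 0" using Cb_blk(1)[of 0] nsU UV unfolding is_block_def U_def by blast
  then have "Cb 1 \<subseteq> Cb 0" unfolding U_def by blast
  then have "Cb 0 = Cb 1" using Cb_blk(1)[of 1] Cb_blk(1)[of 0] unfolding is_block_def by blast
  moreover have "Cb 1 = h (G y)" unfolding Cb_def xs_def by simp
  moreover have "Cb 0 = h y" unfolding Cb_def xs_def by simp
  ultimately show False using Gneq[OF yC] by metis
qed


lemma no_odd:
  assumes "t \<ge> 1" and "in_H t V E"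
  shows "\<not> odd_coloring V E 4 (f :: 'a \<Rightarrow> nat)"
proof
  assume oc: "odd_coloring V E 4 f"
  have sg: "simple_graph V E" and exC: "\<exists>C. is_component V E C \<and>
     card {B. is_block V E B \<and> B \<subseteq> C} = t \<and>
     (\<forall>B. is_block V E B \<and> B \<subseteq> C \<longrightarrow> is_C5 E B)"
    using assms(2) unfolding in_H_def by simp_all
  then obtain C where comp: "is_component V E C"
    and ct: "card {B. is_block V E B \<and> B \<subseteq> C} = t"
    and c5': "\<forall>B. is_block V E B \<and> B \<subseteq> C \<longrightarrow> is_C5 E B"
    by blast
  have c5: "is_C5 E B" if "is_block V E B" "B \<subseteq> C" for B using c5' that by blast
  have finV: "finite V" and irr: "\<And>v. \<not> E v v" and inV: "\<And>u v. E u v \<Longrightarrow> u \<in> V \<and> v \<in> V"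
    using sg unfolding simple_graph_def by auto
  have CV: "C \<subseteq> V" using comp unfolding is_component_def by simp
  have finC: "finite C" using CV finV rev_finite_subset by metis
  have prc: "proper_coloring V E 4 f" using oc unfolding odd_coloring_def by simp
  have "{B. is_block V E B \<and> B \<subseteq> C} \<noteq> {}" using ct assms(1) by (metis card.empty not_one_le_zero)
  then obtain B0 where B0: "is_block V E B0" "B0 \<subseteq> C" by auto
  obtain a b where ab: "a \<in> C" "b \<in> C" "a \<noteq> b" using C5_card2[OF c5[OF B0]] B0(2) by blast
  define bal where "bal v B \<longleftrightarrow> (\<forall>u\<in>B. \<forall>u'\<in>B. E v u \<longrightarrow> E v u' \<longrightarrow> f u = f u')" for v B
  have gex: "\<exists>x\<in>B. bal x B" if "is_block V E B" "B \<subseteq> C" for B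
  proof -
    have "B \<subseteq> V" using that(2) CV by (rule subset_trans)
    from C5_bal[OF c5[OF that] this prc finV] show ?thesis unfolding bal_def .
  qed
  have hex: "\<exists>B. is_block V E B \<and> v \<in> B \<and> \<not> bal v B" if vC: "v \<in> C" for v
  proof (rule ccontr)
    assume allb: "\<not> ?thesis"
    obtain c where c: "c \<in> C" "c \<noteq> v" using ab by blast
    have "connected_on E C" using comp unfolding is_component_def by simp
    then have "\<forall>x\<in>C. \<forall>y\<in>C. (\<lambda>u w. u \<in> C \<and> w \<in> C \<and> E u w)\<^sup>*\<^sup>* x y"
      unfolding connected_on_def by simp
    then have "(\<lambda>u w. u \<in> C \<and> w \<in> C \<and> E u w)\<^sup>*\<^sup>* v c"
      using vC c(1) by blast
    then obtain u where "E v u" using c(2)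
      by (metis (no_types, lifting) converse_rtranclpE)
    then have "\<exists>u\<in>V. E v u" using inV by blast
    then obtain k where odd: "odd (card {u\<in>V. E v u \<and> f u = k})"
      using oc vC CV unfolding odd_coloring_def by blast
    define A where "A = {u\<in>V. E v u \<and> f u = k}"
    define Bs where "Bs = {B. is_block V E B \<and> v \<in> B}"
    have finBs: "finite Bs"
    proof -
      have "Bs \<subseteq> Pow V" unfolding Bs_def is_block_def by auto
      then show ?thesis using finV by (metis finite_Pow_iff rev_finite_subset)
    qed
    have AU: "A = (\<Union>B\<in>Bs. A \<inter> B)"
    proof
      show "A \<subseteq> (\<Union>B\<in>Bs. A \<inter> B)"
      proof
        fix u assume "u \<in> A"
        then have "E v u" unfolding A_def by simp
        then obtain B where "is_block V E B" "v \<in> B" "u \<in> B" using block_exists[OF sg] by blast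
        then show "u \<in> (\<Union>B\<in>Bs. A \<inter> B)" using \<open>u \<in> A\<close> unfolding Bs_def by blast
      qed
    qed auto
    have "card A = (\<Sum>B\<in>Bs. card (A \<inter> B))"
    proof -
      have "card (\<Union>B\<in>Bs. A \<inter> B) = (\<Sum>B\<in>Bs. card (A \<inter> B))"
      proof (rule card_UN_disjoint[OF finBs])
        show "\<forall>B\<in>Bs. finite (A \<inter> B)" using finV unfolding A_def by auto
        show "\<forall>B\<in>Bs. \<forall>B'\<in>Bs. B \<noteq> B' \<longrightarrow> A \<inter> B \<inter> (A \<inter> B') = {}"
        proof (intro ballI impI)
          fix B B' assume "B \<in> Bs" "B' \<in> Bs" "B \<noteq> B'"
          show "A \<inter> B \<inter> (A \<inter> B') = {}"
          proof (rule ccontr)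
            assume "A \<inter> B \<inter> (A \<inter> B') \<noteq> {}"
            then obtain u where u: "u \<in> A" "u \<in> B" "u \<in> B'" by blast
            have "u \<noteq> v" using u irr unfolding A_def by auto
            then have "B = B'" using block_eq[of V E B B' v u] \<open>B \<in> Bs\<close> \<open>B' \<in> Bs\<close> u
              unfolding Bs_def by auto
            then show False using \<open>B \<noteq> B'\<close> by simp
          qed
        qed
      qed
      then show ?thesis using AU by simp
    qed
    moreover have "even (card (A \<inter> B))" if "B \<in> Bs" for B
    proof -
      have Bb: "is_block V E B" "v \<in> B" using that unfolding Bs_def by auto
      have BC: "B \<subseteq> C" using block_in_comp[OF comp Bb(1) Bb(2) vC] .
      obtain a1 b1 where ab1: "a1 \<noteq> b1" "a1 \<in> B" "b1 \<in> B" "{u \<in> B. E v u} = {a1,b1}"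
        using C5_nbrs[OF c5[OF Bb(1) BC] Bb(2)] by blast
      have "bal v B" using allb Bb by blast
      moreover have "E v a1" "E v b1" using ab1(4) by (simp_all add: set_eq_iff, metis insertI1, metis insertI1 insertI2)
      ultimately have fab: "f a1 = f b1" using ab1(2,3) unfolding bal_def by blast
      have BV: "B \<subseteq> V" using BC CV by (rule subset_trans)
      have "A \<inter> B = {u \<in> B. E v u} \<inter> {u. f u = k}"
        unfolding A_def using BV by blast
      then have eq: "A \<inter> B = {a1,b1} \<inter> {u. f u = k}"
        unfolding ab1(4) .
      show ?thesis
      proof (cases "f a1 = k")
        case True
        then have "A \<inter> B = {a1,b1}" using eq fab by auto
        then show ?thesis using ab1(1) by simp
      next
        case False
        then have "A \<inter> B = {}" using eq fab by auto
        then show ?thesis by simp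
      qed
    qed
    ultimately have "even (card A)" using dvd_sum by metis
    then show False using odd unfolding A_def by simp
  qed
  define h where "h v = (SOME B. is_block V E B \<and> v \<in> B \<and> \<not> bal v B)" for v
  define g where "g B = (SOME x. x \<in> B \<and> bal x B)" for B
  have hprop: "is_block V E (h v) \<and> v \<in> h v \<and> \<not> bal v (h v)" if "v \<in> C" for v
    using someI_ex[OF hex[OF that]] unfolding h_def by blast
  have hb: "is_block V E (h v) \<and> v \<in> h v \<and> h v \<subseteq> C" if "v \<in> C" for v
    using hprop[OF that] block_in_comp[OF comp _ _ that] by blast
  have gprop: "g (h v) \<in> h v \<and> bal (g (h v)) (h v)" if "v \<in> C" for v
  proof -
    have "\<exists>x. x \<in> h v \<and> bal x (h v)" using gex hb[OF that] by blast
    then show ?thesis using someI_ex unfolding g_def by (metis (mono_tags, lifting))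
  qed
  show False
  proof (rule no_cycle[of C V E h "\<lambda>v. g (h v)"])
    show "finite C" by (rule finC)
    show "C \<noteq> {}" using ab by auto
    show "\<And>v. v \<in> C \<Longrightarrow> is_block V E (h v) \<and> v \<in> h v \<and> h v \<subseteq> C" by (rule hb)
    show "\<And>v. v \<in> C \<Longrightarrow> \<exists>a b. a \<in> h v \<and> b \<in> h v \<and> a \<noteq> b"
    proof -
      fix v assume "v \<in> C"
      then have "is_block V E (h v)" "h v \<subseteq> C" using hb by blast+
      then show "\<exists>a b. a \<in> h v \<and> b \<in> h v \<and> a \<noteq> b" by (rule C5_card2[OF c5])
    qed
    show "\<And>v. v \<in> C \<Longrightarrow> g (h v) \<in> h v" using gprop by blast
    show "h (g (h v)) \<noteq> h v" if "v \<in> C" for v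
    proof
      assume eq: "h (g (h v)) = h v"
      have "g (h v) \<in> C" using gprop[OF that] hb[OF that] by blast
      then have "\<not> bal (g (h v)) (h (g (h v)))" using hprop by blast
      then show False using eq gprop[OF that] by simp
    qed
  qed
qed

theorem mainTheorem4:
  fixes t :: nat and V :: "'a set" and E :: "'a \<Rightarrow> 'a \<Rightarrow> bool"
  assumes "t \<ge> 1" and "in_H t V E"
  shows "(\<nexists>f :: 'a \<Rightarrow> nat. odd_coloring V E 4 f) \<and> (\<nexists>f :: 'a \<Rightarrow> nat. pcf_coloring V E 4 f)"
proof -
  have 1: "\<nexists>f :: 'a \<Rightarrow> nat. odd_coloring V E 4 f" using no_odd[OF assms] by blast
  have "odd_coloring V E 4 f" if "pcf_coloring V E 4 f" for f :: "'a \<Rightarrow> nat"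
    using that unfolding pcf_coloring_def odd_coloring_def by (metis odd_one)
  then show ?thesis using 1 by blast
qed

end
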